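(* Consider the binary noisy-label setting described in the context, and assume ${\mathbb P}(Y=+1)={\mathbb P}(Y=-1)$ and $e_+=e_-$. Let $\mathcal H$ be a hypothesis space, $h^*_f\in\arg\max_{h\in\mathcal H}D_f(P_{h\times Y}\|Q_{h\times Y})$, and $\mathcal H^*$ as defined in the context. Then for each of the following $f$-divergences, $D_f$ is $\mathcal H^*$-robust, i.e. $h^*_f=\arg\max_{h\in\mathcal H^*}D_f(\tilde P_{h\times\tilde Y}\|\tilde Q_{h\times\tilde Y})$: Total Variation $f(v)=\frac12|v-1|$; Jenson–Shannon $f(v)=v\log v-(v+1)\log\frac{v+1}{2}$ (with $f^*(u)=-\log(2-e^u)$); Squared Hellinger $f(v)=(\sqrt v-1)^2$; Pearson $\chi^2$ $f(v)=(v-1)^2$; Neyman $\chi^2$ $f(v)=(1-v)^2/v$; KL $f(v)=v\log v$; Reverse KL $f(v)=-\log v$.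
   Context: $(X,Y)$ with $X\in\mathcal X$, $Y\in\{-1,+1\}$; noisy label $\tilde Y$ generated from $Y$, conditionally independently of $X$ given $Y$, with $e_+={\mathbb P}(\tilde Y=-1\mid Y=+1)$, $e_-={\mathbb P}(\tilde Y=+1\mid Y=-1)$, $e_++e_-<1$. A hypothesis space $\mathcal H$ is a set of classifiers $h:\mathcal X\to\{-1,+1\}$. $P_{h\times Y}(y,y')={\mathbb P}(h(X)=y,Y=y')$, $Q_{h\times Y}(y,y')={\mathbb P}(h(X)=y){\mathbb P}(Y=y')$, $\tilde P_{h\times\tilde Y},\tilde Q_{h\times\tilde Y}$ the same with $\tilde Y$; $D_f(P\|Q)=\sum_z q(z)f(p(z)/q(z))$. For $R\in\{Y,\tilde Y\}$ the fitness is ${\rm FIT}(h=y,R=y')=\frac{{\mathbb P}(h(X)=y\mid R=y')}{{\mathbb P}(h(X)=y)}$. Define $\mathcal H^*=\{h\in\mathcal H:\min_y{\rm FIT}(h=y,\tilde Y=y)\ge\max_y{\rm FIT}(h^*_f=y,Y=y)\ge1\}\cup\{h^*_f\}$. *)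

theory Defs
  imports "HOL-Probability.Probability"
begin

definition labels :: "int set" where
  "labels = {-1, 1}"

definition Pj :: "'a measure \<Rightarrow> ('a \<Rightarrow> int) \<Rightarrow> ('a \<Rightarrow> int) \<Rightarrow> int \<times> int \<Rightarrow> real" where
  "Pj M A B = (\<lambda>(y, y'). measure M {\<omega> \<in> space M. A \<omega> = y \<and> B \<omega> = y'})"

definition Qj :: "'a measure \<Rightarrow> ('a \<Rightarrow> int) \<Rightarrow> ('a \<Rightarrow> int) \<Rightarrow> int \<times> int \<Rightarrow> real" where
  "Qj M A B = (\<lambda>(y, y'). measure M {\<omega> \<in> space M. A \<omega> = y}
                        * measure M {\<omega> \<in> space M. B \<omega> = y'})"

text \<open>f-divergence D_f(P||Q) = sum_z q(z) f(p(z)/q(z)) over z in {-1,+1}^2, extended-real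
valued so that f may take the value +infinity at 0 (reverse KL, Neyman chi^2);
terms with q(z) = 0 vanish (ereal 0 * infinity = 0).\<close>
definition fdiv :: "(real \<Rightarrow> ereal) \<Rightarrow> (int \<times> int \<Rightarrow> real) \<Rightarrow> (int \<times> int \<Rightarrow> real) \<Rightarrow> ereal" where
  "fdiv f p q = (\<Sum>z \<in> labels \<times> labels. ereal (q z) * f (p z / q z))"

definition FIT :: "'a measure \<Rightarrow> ('a \<Rightarrow> int) \<Rightarrow> ('a \<Rightarrow> int) \<Rightarrow> int \<Rightarrow> int \<Rightarrow> real" where
  "FIT M A R y y' =
     (measure M {\<omega> \<in> space M. A \<omega> = y \<and> R \<omega> = y'} / measure M {\<omega> \<in> space M. R \<omega> = y'})
     / measure M {\<omega> \<in> space M. A \<omega> = y}"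

definition Hstar :: "'a measure \<Rightarrow> ('a \<Rightarrow> 'x) \<Rightarrow> ('a \<Rightarrow> int) \<Rightarrow> ('a \<Rightarrow> int)
                     \<Rightarrow> ('x \<Rightarrow> int) set \<Rightarrow> ('x \<Rightarrow> int) \<Rightarrow> ('x \<Rightarrow> int) set" where
  "Hstar M X Y Yt H hs =
     {h \<in> H. min (FIT M (h \<circ> X) Yt 1 1) (FIT M (h \<circ> X) Yt (-1) (-1))
               \<ge> max (FIT M (hs \<circ> X) Y 1 1) (FIT M (hs \<circ> X) Y (-1) (-1))
             \<and> max (FIT M (hs \<circ> X) Y 1 1) (FIT M (hs \<circ> X) Y (-1) (-1)) \<ge> 1}
     \<union> {hs}"

definition f_TV :: "real \<Rightarrow> ereal" where
  "f_TV v = ereal (\<bar>v - 1\<bar> / 2)"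
definition f_JS :: "real \<Rightarrow> ereal" where
  "f_JS v = ereal (v * ln v - (v + 1) * ln ((v + 1) / 2))"
definition f_SH :: "real \<Rightarrow> ereal" where
  "f_SH v = ereal ((sqrt v - 1)\<^sup>2)"
definition f_Pearson :: "real \<Rightarrow> ereal" where
  "f_Pearson v = ereal ((v - 1)\<^sup>2)"
definition f_Neyman :: "real \<Rightarrow> ereal" where
  "f_Neyman v = (if v = 0 then \<infinity> else ereal ((1 - v)\<^sup>2 / v))"
definition f_KL :: "real \<Rightarrow> ereal" where
  "f_KL v = ereal (v * ln v)"
definition f_RKL :: "real \<Rightarrow> ereal" where
  "f_RKL v = (if v = 0 then \<infinity> else ereal (- ln v))"

end

theory Submission
  imports Defs "HOL-Real_Asymp.Real_Asymp"
begin


lemma xlnx_cont: "continuous_on {0..} (\<lambda>x::real. x * ln x)"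
proof (rule continuous_on_eq_continuous_within[THEN iffD2], intro ballI)
  fix x :: real assume "x \<in> {0..}"
  show "continuous (at x within {0..}) (\<lambda>x. x * ln x)"
  proof (cases "x = 0")
    case True
    have "((\<lambda>x::real. x * ln x) \<longlongrightarrow> 0) (at_right 0)" by real_asymp
    then show ?thesis using True by (simp add: continuous_within at_within_Ici_at_right)
  next
    case False
    then have "x > 0" using \<open>x \<in> {0..}\<close> by auto
    then have "isCont (\<lambda>x. x * ln x) x" by (auto intro!: continuous_intros)
    then show ?thesis using continuous_at_imp_continuous_at_within by blast
  qed
qed

lemma xlnx_cont2: fixes a b c :: real assumes "0 \<le> c + a"
  shows "continuous_on {a..b} (\<lambda>s::real. (c + s) * ln (c + s))"
proof -
  have sub: "(\<lambda>s. c + s) ` {a..b} \<subseteq> {0..}" using assms by auto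
  have "continuous_on {a..b} ((\<lambda>x. x * ln x) \<circ> (\<lambda>s. c + s))"
    by (rule continuous_on_compose[OF _ continuous_on_subset[OF xlnx_cont sub]]) (intro continuous_intros)
  then show ?thesis by (simp add: o_def)
qed

lemma xlnx_cont3: fixes a b c :: real assumes "0 \<le> c - b"
  shows "continuous_on {a..b} (\<lambda>s::real. (c - s) * ln (c - s))"
proof -
  have sub: "(\<lambda>s. c - s) ` {a..b} \<subseteq> {0..}" using assms by auto
  have "continuous_on {a..b} ((\<lambda>x. x * ln x) \<circ> (\<lambda>s. c - s))"
    by (rule continuous_on_compose[OF _ continuous_on_subset[OF xlnx_cont sub]]) (intro continuous_intros)
  then show ?thesis by (simp add: o_def)
qed

lemma KL_mono: fixes x y :: real shows "0 \<le> x \<Longrightarrow> x < y \<Longrightarrow> y \<le> 1 \<Longrightarrow>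
  (1+x)*ln(1+x) + (1-x)*ln(1-x) < (1+y)*ln(1+y) + (1-y)*ln(1-y)"
proof -
  assume h: "0 \<le> x" "x < y" "y \<le> 1"
  let ?g = "\<lambda>s::real. (1+s)*ln(1+s) + (1-s)*ln(1-s)"
  have "?g x < ?g y"
  proof (rule DERIV_pos_imp_increasing_open[OF h(2)])
    fix s assume s: "x < s" "s < y"
    show "\<exists>d. DERIV ?g s :> d \<and> d > 0"
    proof (intro exI conjI)
      show "DERIV ?g s :> (ln (1+s) + 1) + (- ln (1-s) - 1)"
        using s h by (auto intro!: derivative_eq_intros)
      have "ln (1-s) < ln (1+s)" using s h by simp
      then show "(ln (1+s) + 1) + (- ln (1-s) - 1) > 0" by simp
    qed
  next
    show "continuous_on {x..y} ?g"
      using h by (intro continuous_on_add xlnx_cont2 xlnx_cont3) auto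
  qed
  then show ?thesis .
qed

lemma JS_mono: fixes x y :: real shows "0 \<le> x \<Longrightarrow> x < y \<Longrightarrow> y \<le> 1 \<Longrightarrow>
  (1+x)*ln(1+x) - (2+x)*ln((2+x)/2) + ((1-x)*ln(1-x) - (2-x)*ln((2-x)/2))
   < (1+y)*ln(1+y) - (2+y)*ln((2+y)/2) + ((1-y)*ln(1-y) - (2-y)*ln((2-y)/2))"
proof -
  assume h: "0 \<le> x" "x < y" "y \<le> 1"
  let ?g = "\<lambda>s::real. (1+s)*ln(1+s) - (2+s)*ln((2+s)/2) + ((1-s)*ln(1-s) - (2-s)*ln((2-s)/2))"
  have "?g x < ?g y"
  proof (rule DERIV_pos_imp_increasing_open[OF h(2)])
    fix s assume s: "x < s" "s < y"
    show "\<exists>d. DERIV ?g s :> d \<and> d > 0"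
    proof (intro exI conjI)
      have d1: "((\<lambda>s. (2+s)*ln((2+s)/2)) has_real_derivative ln((2+s)/2) + 1) (at s)"
        using s h by (auto intro!: derivative_eq_intros)
      have d2: "((\<lambda>s. (2-s)*ln((2-s)/2)) has_real_derivative - ln((2-s)/2) - 1) (at s)"
        using s h by (auto intro!: derivative_eq_intros)
      have d3: "((\<lambda>s. (1+s)*ln(1+s)) has_real_derivative ln(1+s) + 1) (at s)"
        using s h by (auto intro!: derivative_eq_intros)
      have d4: "((\<lambda>s. (1-s)*ln(1-s)) has_real_derivative - ln(1-s) - 1) (at s)"
        using s h by (auto intro!: derivative_eq_intros)
      show "DERIV ?g s :> ((ln (1+s) + 1) - (ln ((2+s)/2) + 1)) + ((- ln (1-s) - 1) - (- ln ((2-s)/2) - 1))"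
        by (intro DERIV_add DERIV_diff d1 d2 d3 d4)
      have "(1-s)*(2+s) < (1+s)*(2-s)" using s h by (simp add: algebra_simps)
      then have "ln ((1-s)*(2+s)) < ln ((1+s)*(2-s))" using s h by (subst ln_less_cancel_iff) auto
      then have "ln (1-s) + ln (2+s) < ln (1+s) + ln (2-s)" using s h by (simp add: ln_mult)
      moreover have "ln ((2+s)/2) = ln (2+s) - ln 2" "ln ((2-s)/2) = ln (2-s) - ln 2"
        using s h by (simp_all add: ln_div)
      ultimately show "((ln (1+s) + 1) - (ln ((2+s)/2) + 1)) + ((- ln (1-s) - 1) - (- ln ((2-s)/2) - 1)) > 0" by simp
    qed
  next
    show "continuous_on {x..y} ?g"
      using h by (intro continuous_on_add continuous_on_diff xlnx_cont2 xlnx_cont3) (auto intro!: continuous_intros)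
  qed
  then show ?thesis .
qed


definition Gf :: "(real \<Rightarrow> ereal) \<Rightarrow> real \<Rightarrow> ereal" where
  "Gf f s = f (1 + s) + f (1 - s)"

lemma sqrt_sum_mono:
  fixes x y :: real assumes h: "0 \<le> x" "x < y" "y \<le> 1"
  shows "sqrt (1+y) + sqrt (1-y) < sqrt (1+x) + sqrt (1-x)"
proof -
  have sq: "(sqrt (1+z) + sqrt (1-z))^2 = 2 + 2 * sqrt (1 - z^2)" if "0 \<le> z" "z \<le> 1" for z :: real
  proof -
    have "(sqrt (1+z) + sqrt (1-z))^2 = (1+z) + (1-z) + 2 * (sqrt (1+z) * sqrt (1-z))"
      using that by (simp add: power2_eq_square algebra_simps)
    also have "sqrt (1+z) * sqrt (1-z) = sqrt (1 - z^2)"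
      by (simp add: real_sqrt_mult[symmetric] power2_eq_square algebra_simps)
    finally show ?thesis by simp
  qed
  have "sqrt (1 - y^2) < sqrt (1 - x^2)"
    using h by (simp add: power_strict_mono)
  then have "(sqrt (1+y) + sqrt (1-y))^2 < (sqrt (1+x) + sqrt (1-x))^2"
    using sq[of x] sq[of y] h by simp
  then show ?thesis
    by (rule power_less_imp_less_base) (use h in simp)
qed

lemma good_f:
  assumes "f \<in> {f_TV, f_JS, f_SH, f_Pearson, f_Neyman, f_KL, f_RKL}"
  shows "f 1 = 0" "\<And>v. f v \<noteq> -\<infinity>" "\<And>v. v > 0 \<Longrightarrow> f v \<noteq> \<infinity>"
    "\<And>x y. 0 \<le> x \<Longrightarrow> x < y \<Longrightarrow> y \<le> 1 \<Longrightarrow> Gf f x < Gf f y"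
proof -
  show "f 1 = 0" using assms
    by (auto simp: f_TV_def f_JS_def f_SH_def f_Pearson_def f_Neyman_def f_KL_def f_RKL_def)
  show "\<And>v. f v \<noteq> -\<infinity>" using assms
    unfolding f_TV_def f_JS_def f_SH_def f_Pearson_def f_Neyman_def f_KL_def f_RKL_def
    by (elim insertE emptyE) simp_all
  show "\<And>v. v > 0 \<Longrightarrow> f v \<noteq> \<infinity>" using assms
    by (auto simp: f_TV_def f_JS_def f_SH_def f_Pearson_def f_Neyman_def f_KL_def f_RKL_def)
  fix x y :: real assume h: "0 \<le> x" "x < y" "y \<le> 1"
  consider "f = f_TV" | "f = f_JS" | "f = f_SH" | "f = f_Pearson" | "f = f_Neyman" | "f = f_KL" | "f = f_RKL"
    using assms by blast
  then show "Gf f x < Gf f y"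
  proof cases
    case 1 then show ?thesis using h by (simp add: Gf_def f_TV_def)
  next
    case 2
    have e: "1 + z + 1 = 2 + z" "1 - z + 1 = 2 - z" for z :: real by simp_all
    show ?thesis using 2 JS_mono[OF h] unfolding Gf_def f_JS_def e by simp
  next
    case 3
    have "(sqrt (1+x) - 1)^2 + (sqrt (1-x) - 1)^2 = 4 - 2 * (sqrt (1+x) + sqrt (1-x))"
      using h by (simp add: power2_eq_square algebra_simps)
    moreover have "(sqrt (1+y) - 1)^2 + (sqrt (1-y) - 1)^2 = 4 - 2 * (sqrt (1+y) + sqrt (1-y))"
      using h by (simp add: power2_eq_square algebra_simps)
    ultimately show ?thesis using 3 sqrt_sum_mono[OF h] by (simp add: Gf_def f_SH_def)
  next
    case 4 then show ?thesis using h by (simp add: Gf_def f_Pearson_def power_strict_mono)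
  next
    case 5
    show ?thesis
    proof (cases "y = 1")
      case True
      then show ?thesis using 5 h by (simp add: Gf_def f_Neyman_def)
    next
      case False
      have e: "(1 - (1+z))^2 / (1+z) + (1 - (1-z))^2 / (1-z) = 2 * z^2 / (1 - z^2)" if "0 \<le> z" "z < 1" for z :: real
        using that by (simp add: field_simps power2_eq_square)
      have "x^2 < y^2" using h by (simp add: power_strict_mono)
      moreover have "x^2 < 1" "y^2 < 1" using h False by (simp_all add: power_strict_mono abs_square_less_1)
      ultimately have "2 * x^2 / (1 - x^2) < 2 * y^2 / (1 - y^2)"
      proof -
        have "2*x^2/(1-x^2) < 2*y^2/(1-x^2)"
          by (rule divide_strict_right_mono) (use \<open>x^2 < y^2\<close> \<open>x^2 < 1\<close> in auto)
        also have "\<dots> \<le> 2*y^2/(1-y^2)"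
          by (rule divide_left_mono) (use \<open>x^2 < y^2\<close> \<open>y^2 < 1\<close> in auto)
        finally show ?thesis .
      qed
      then show ?thesis using 5 h False e[of x] e[of y] by (simp add: Gf_def f_Neyman_def)
    qed
  next
    case 6 then show ?thesis using KL_mono[OF h] by (simp add: Gf_def f_KL_def)
  next
    case 7
    show ?thesis
    proof (cases "y = 1")
      case True
      then show ?thesis using 7 h by (simp add: Gf_def f_RKL_def)
    next
      case False
      have e: "- ln (1+z) + - ln (1-z) = - ln (1 - z^2)" if "0 \<le> z" "z < 1" for z :: real
      proof -
        have "1 - z^2 = (1+z)*(1-z)" by (simp add: power2_eq_square algebra_simps)
        then have "ln (1 - z^2) = ln (1+z) + ln (1-z)" using that by (simp add: ln_mult)
        then show ?thesis by simp
      qed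
      have "x^2 < y^2" using h by (simp add: power_strict_mono)
      moreover have "y^2 < 1" using h False by (simp add: abs_square_less_1)
      ultimately have "ln (1 - y^2) < ln (1 - x^2)" by simp
      then show ?thesis using 7 h False e[of x] e[of y] by (simp add: Gf_def f_RKL_def)
    qed
  qed
qed



lemma ereal_c_distrib: "c \<ge> 0 \<Longrightarrow> x \<noteq> -\<infinity> \<Longrightarrow> y \<noteq> -\<infinity> \<Longrightarrow>
  ereal c * (x + y) = ereal c * x + ereal c * y"
  by (cases x; cases y; cases "c = 0") (auto simp: distrib_left)

lemma ereal_L2: "c > 0 \<Longrightarrow> ereal g < X \<Longrightarrow> ereal (c*g) < ereal c * X"
  by (cases X) auto

lemma ereal_L3: "ereal u < A \<Longrightarrow> ereal v < B \<Longrightarrow> ereal (u+v) < A + B"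
  by (cases A; cases B) auto

lemma ereal_L4: "c \<ge> 0 \<Longrightarrow> X \<le> ereal g \<Longrightarrow> ereal c * X \<le> ereal (c*g)"
  using ereal_mult_left_mono[of X "ereal g" "ereal c"] by simp

lemma term_eq: "(q::real) \<ge> 0 \<Longrightarrow> pp = q * (1 + s) \<Longrightarrow> ereal q * f (pp / q) = ereal q * f (1 + s)"
  by (cases "q = 0") (auto simp: zero_ereal_def[symmetric])

definition DD :: "(real \<Rightarrow> ereal) \<Rightarrow> real \<Rightarrow> real \<Rightarrow> ereal" where
  "DD f a p = ereal (a/2) * Gf f ((2*p-a)/a) + ereal ((1-a)/2) * Gf f ((2*p-a)/(1-a))"

lemma fdiv_eq:
  assumes "P (1,1) = p" "P (1,-1) = a-p" "P (-1,1) = 1/2-p" "P (-1,-1) = 1/2-a+p"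
    "Q (1,1) = a*(1/2)" "Q (1,-1) = a*(1/2)" "Q (-1,1) = (1-a)*(1/2)" "Q (-1,-1) = (1-a)*(1/2)"
    "0 \<le> p" "p \<le> a" "p \<le> 1/2" "a - p \<le> 1/2"
    "\<And>v. f v \<noteq> -\<infinity>"
  shows "fdiv f P Q = DD f a p"
proof -
  have s: "fdiv f P Q = ereal (Q(1,1)) * f (P(1,1)/Q(1,1)) + ereal (Q(1,-1)) * f (P(1,-1)/Q(1,-1))
       + (ereal (Q(-1,1)) * f (P(-1,1)/Q(-1,1)) + ereal (Q(-1,-1)) * f (P(-1,-1)/Q(-1,-1)))"
    unfolding fdiv_def labels_def by (simp add: add_ac)
  define t where "t = 2*p - a"
  have a1: "a*(1/2) = a/2" "(1-a)*(1/2) = (1-a)/2" by simp_all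
  have e1: "p = a/2 * (1 + t/a)" "a - p = a/2 * (1 + - (t/a))"
    using assms by (cases "a = 0"; auto simp: t_def field_simps)+
  have e2: "1/2 - p = (1-a)/2 * (1 + - (t/(1-a)))" "1/2-a+p = (1-a)/2 * (1 + t/(1-a))"
    using assms by (cases "a = 1"; auto simp: t_def field_simps)+
  have a0: "0 \<le> a/2" "0 \<le> (1-a)/2" using assms(9-12) by simp_all
  have t1: "ereal (a/2) * f (p / (a/2)) = ereal (a/2) * f (1 + t/a)"
    by (rule term_eq[OF a0(1) e1(1)])
  have t2: "ereal (a/2) * f ((a-p) / (a/2)) = ereal (a/2) * f (1 + - (t/a))"
    by (rule term_eq[OF a0(1) e1(2)])
  have t3: "ereal ((1-a)/2) * f ((1/2-p) / ((1-a)/2)) = ereal ((1-a)/2) * f (1 + - (t/(1-a)))"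
    by (rule term_eq[OF a0(2) e2(1)])
  have t4: "ereal ((1-a)/2) * f ((1/2-a+p) / ((1-a)/2)) = ereal ((1-a)/2) * f (1 + t/(1-a))"
    by (rule term_eq[OF a0(2) e2(2)])
  have "fdiv f P Q = ereal (a/2) * f (1 + t/a) + ereal (a/2) * f (1 + - (t/a))
       + (ereal ((1-a)/2) * f (1 + - (t/(1-a))) + ereal ((1-a)/2) * f (1 + t/(1-a)))"
    unfolding s assms(1-8) a1 t1 t2 t3 t4 by (rule refl)
  also have "\<dots> = DD f a p"
    unfolding DD_def Gf_def t_def[symmetric] using assms(9-13)
    by (simp add: ereal_c_distrib add_ac)
  finally show ?thesis .
qed



definition Fit1 :: "real \<Rightarrow> real \<Rightarrow> real" where "Fit1 a p = (p / (1/2)) / a"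
definition Fitm :: "real \<Rightarrow> real \<Rightarrow> real" where "Fitm a p = ((1/2 - a + p) / (1/2)) / (1 - a)"

lemma core:
  fixes f :: "real \<Rightarrow> ereal" and a p as ps e :: real
  assumes f1: "f 1 = 0" and fninf: "\<And>v. f v \<noteq> -\<infinity>" and ffin: "\<And>v. v > 0 \<Longrightarrow> f v \<noteq> \<infinity>"
    and Gmono: "\<And>x y. 0 \<le> x \<Longrightarrow> x < y \<Longrightarrow> y \<le> 1 \<Longrightarrow> Gf f x < Gf f y"
    and r: "0 \<le> p" "p \<le> a" "p \<le> 1/2" "a - p \<le> 1/2"
    and rs: "0 \<le> ps" "ps \<le> as" "ps \<le> 1/2" "as - ps \<le> 1/2"
    and e: "0 \<le> e" "e < 1/2"
    and hmax: "DD f a p \<le> DD f as ps"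
    and hstar: "min (Fit1 a ((1-2*e)*p + e*a)) (Fitm a ((1-2*e)*p + e*a))
                 \<ge> max (Fit1 as ps) (Fitm as ps)" "max (Fit1 as ps) (Fitm as ps) \<ge> 1"
  shows "DD f a ((1-2*e)*p + e*a) \<le> DD f as ((1-2*e)*ps + e*as)"
proof (cases "e = 0")
  case True then show ?thesis using hmax by simp
next
  case False
  then have e0: "e > 0" using e by simp
  have G0: "Gf f 0 = 0" using f1 by (simp add: Gf_def)
  have Gle: "Gf f x \<le> Gf f y" if "0 \<le> x" "x \<le> y" "y \<le> 1" for x y
    using Gmono[of x y] that by (cases "x = y") auto
  have Geven: "Gf f (-x) = Gf f x" for x by (simp add: Gf_def add.commute)
  have Gnn: "Gf f x \<ge> 0" if "\<bar>x\<bar> \<le> 1" for x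
  proof (cases "x \<ge> 0")
    case True then show ?thesis using Gle[of 0 x] that G0 by auto
  next
    case False then show ?thesis using Gle[of 0 "-x"] that G0 Geven[of x] by auto
  qed
  define t where "t = 2*p - a"
  define ts where "ts = 2*ps - as"
  define m where "m = max (ts/as) (ts/(1-as))"
  have R: "max (Fit1 as ps) (Fitm as ps) = 1 + m"
  proof -
    consider "as = 0" | "as = 1" | "0 < as \<and> as < 1" using rs by linarith
    then show ?thesis
    proof cases
      case 1 then have "ps = 0" using rs by simp
      then show ?thesis using 1 by (simp add: Fit1_def Fitm_def m_def ts_def)
    next
      case 2 then have "ps = 1/2" using rs by simp
      then show ?thesis using 2 by (simp add: Fit1_def Fitm_def m_def ts_def)
    next
      case 3
      have "Fit1 as ps = 1 + ts/as" "Fitm as ps = 1 + ts/(1-as)"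
        using 3 by (simp_all add: Fit1_def Fitm_def ts_def field_simps)
      then show ?thesis by (simp add: m_def)
    qed
  qed
  have m0: "m \<ge> 0" using hstar(2) R by simp
  have tsnn: "ts \<ge> 0"
  proof (cases "0 < as \<and> as < 1")
    case True
    then show ?thesis using m0 unfolding m_def
      by (auto simp: max_def split: if_splits simp: divide_nonneg_pos zero_le_divide_iff)
  next
    case False
    then have "as = 0 \<or> as = 1" using rs by linarith
    then show ?thesis using rs by (auto simp: ts_def)
  qed
  have tsb1: "0 \<le> ts/as" "ts/as \<le> m" "0 \<le> ts/(1-as)" "ts/(1-as) \<le> m"
    using tsnn rs by (auto simp: m_def)
  define p' where "p' = (1-2*e)*p + e*a"
  have a0: "0 < a"
  proof (rule ccontr)
    assume "\<not> 0 < a" then have "a = 0" using r by simp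
    then have "Fit1 a p' = 0" by (simp add: Fit1_def)
    then show False using hstar R m0 p'_def by (simp add: min_def split: if_splits)
  qed
  have a1: "a < 1"
  proof (rule ccontr)
    assume "\<not> a < 1" then have "a = 1" using r by simp
    then have "Fitm a p' = 0" by (simp add: Fitm_def)
    then show False using hstar R m0 p'_def by (simp add: min_def split: if_splits)
  qed
  have F1: "Fit1 a p' = 1 + (1-2*e)*t/a" "Fitm a p' = 1 + (1-2*e)*t/(1-a)"
    using a0 a1 by (simp_all add: Fit1_def Fitm_def p'_def t_def field_simps)
  have c1: "(1-2*e)*t/a \<ge> m" "(1-2*e)*t/(1-a) \<ge> m"
    using hstar(1) R F1 unfolding p'_def by auto
  have tb: "t \<le> a" "-a \<le> t" "t \<le> 1-a" "a - 1 \<le> t" using r by (auto simp: t_def)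
  have tnn: "t \<ge> 0"
  proof -
    have "(1-2*e)*t/a \<ge> 0" using c1 m0 by linarith
    then show ?thesis using a0 e by (simp add: zero_le_divide_iff zero_le_mult_iff)
  qed
  have tp': "2*p' - a = (1-2*e)*t" by (simp add: p'_def t_def algebra_simps)
  have tps': "2*((1-2*e)*ps + e*as) - as = (1-2*e)*ts" by (simp add: ts_def algebra_simps)
  show ?thesis
  proof (cases "t = 0")
    case True
    have "DD f a p' = 0" unfolding DD_def tp' True using G0 by simp
    moreover have "DD f as ((1-2*e)*ps + e*as) \<ge> 0"
    proof -
      have q: "0 \<le> (1-2*e)*ts" "(1-2*e)*ts \<le> ts" "ts \<le> as" "ts \<le> 1-as"
        using tsnn e rs by (auto simp: ts_def mult_left_le_one_le)
      have b1: "\<bar>(1-2*e)*ts/as\<bar> \<le> 1"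
        using q by (cases "as = 0") (auto simp: divide_le_eq_1)
      have b2: "\<bar>(1-2*e)*ts/(1-as)\<bar> \<le> 1"
        using q by (cases "as = 1") (auto simp: divide_le_eq_1)
      show ?thesis unfolding DD_def tps' using Gnn[OF b1] Gnn[OF b2] rs
        by (intro add_nonneg_nonneg mult_nonneg_nonneg) auto
    qed
    ultimately show ?thesis unfolding p'_def by simp
  next
    case False
    then have tpos: "t > 0" using tnn by simp
    have "(1-2*e)*t < t" using e0 tpos by (simp add: algebra_simps)
    then have lt1: "m < t/a" "m < t/(1-a)"
      using c1 a0 a1 by (auto simp: divide_strict_right_mono intro: order.trans order.strict_trans1)
    have le1: "t/a \<le> 1" "t/(1-a) \<le> 1" using tb a0 a1 by auto
    have "Gf f m \<noteq> \<infinity>" "Gf f m \<noteq> -\<infinity>"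
      using lt1 le1 m0 fninf ffin by (auto simp: Gf_def)
    then obtain g where g: "Gf f m = ereal g" by (cases "Gf f m") auto
    have "ereal (a/2*g + (1-a)/2*g) < DD f a p"
      unfolding DD_def t_def[symmetric]
      apply (intro ereal_L3 ereal_L2)
      using a0 a1 Gmono[OF m0 lt1(1) le1(1)] Gmono[OF m0 lt1(2) le1(2)] g by auto
    also have "\<dots> \<le> DD f as ps" by (rule hmax)
    also have "\<dots> \<le> ereal (as/2*g) + ereal ((1-as)/2*g)"
      unfolding DD_def ts_def[symmetric]
      apply (intro add_mono ereal_L4)
      using rs tsb1 Gle[of "ts/as" m] Gle[of "ts/(1-as)" m] g m0 lt1 le1 by auto
    finally have "a/2*g + (1-a)/2*g < as/2*g + (1-as)/2*g" by simp
    then have False by (simp add: field_simps)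
    then show ?thesis ..
  qed
qed



lemma split_lab:
  assumes "prob_space M" "{\<omega>\<in>space M. P \<omega>} \<in> sets M" "Z \<in> M \<rightarrow>\<^sub>M count_space UNIV"
    "\<forall>\<omega>\<in>space M. Z \<omega> \<in> labels"
  shows "measure M {\<omega>\<in>space M. P \<omega>} = measure M {\<omega>\<in>space M. P \<omega> \<and> Z \<omega> = 1}
           + measure M {\<omega>\<in>space M. P \<omega> \<and> Z \<omega> = -1}"
proof -
  interpret prob_space M by fact
  have z1: "{\<omega>\<in>space M. Z \<omega> = 1} \<in> sets M" using assms(3) by measurable
  have z2: "{\<omega>\<in>space M. Z \<omega> = -1} \<in> sets M" using assms(3) by measurable
  have s1: "{\<omega>\<in>space M. P \<omega> \<and> Z \<omega> = 1} = {\<omega>\<in>space M. P \<omega>} \<inter> {\<omega>\<in>space M. Z \<omega> = 1}" by auto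
  have s2: "{\<omega>\<in>space M. P \<omega> \<and> Z \<omega> = -1} = {\<omega>\<in>space M. P \<omega>} \<inter> {\<omega>\<in>space M. Z \<omega> = -1}" by auto
  have u: "{\<omega>\<in>space M. P \<omega>} = {\<omega>\<in>space M. P \<omega> \<and> Z \<omega> = 1} \<union> {\<omega>\<in>space M. P \<omega> \<and> Z \<omega> = -1}"
    using assms(4) by (auto simp: labels_def)
  show ?thesis
    apply (subst u)
    apply (rule finite_measure_Union)
    using assms(2) z1 z2 by (auto simp: s1 s2)
qed

lemma reduce:
  fixes M :: "'a measure" and MX :: "'x measure"
    and X :: "'a \<Rightarrow> 'x" and Y Yt :: "'a \<Rightarrow> int" and e :: real and h :: "'x \<Rightarrow> int"
  assumes PS: "prob_space M"
    and Xm[measurable]: "X \<in> M \<rightarrow>\<^sub>M MX"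
    and Ym[measurable]: "Y \<in> M \<rightarrow>\<^sub>M count_space UNIV" and Ytm[measurable]: "Yt \<in> M \<rightarrow>\<^sub>M count_space UNIV"
    and Yl: "\<forall>\<omega>\<in>space M. Y \<omega> \<in> labels" and Ytl: "\<forall>\<omega>\<in>space M. Yt \<omega> \<in> labels"
    and noise_pos: "\<forall>A\<in>sets MX.
           measure M {\<omega>\<in>space M. X \<omega> \<in> A \<and> Y \<omega> = 1 \<and> Yt \<omega> = -1}
             = e * measure M {\<omega>\<in>space M. X \<omega> \<in> A \<and> Y \<omega> = 1}
         \<and> measure M {\<omega>\<in>space M. X \<omega> \<in> A \<and> Y \<omega> = 1 \<and> Yt \<omega> = 1}
             = (1 - e) * measure M {\<omega>\<in>space M. X \<omega> \<in> A \<and> Y \<omega> = 1}"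
    and noise_neg: "\<forall>A\<in>sets MX.
           measure M {\<omega>\<in>space M. X \<omega> \<in> A \<and> Y \<omega> = -1 \<and> Yt \<omega> = 1}
             = e * measure M {\<omega>\<in>space M. X \<omega> \<in> A \<and> Y \<omega> = -1}
         \<and> measure M {\<omega>\<in>space M. X \<omega> \<in> A \<and> Y \<omega> = -1 \<and> Yt \<omega> = -1}
             = (1 - e) * measure M {\<omega>\<in>space M. X \<omega> \<in> A \<and> Y \<omega> = -1}"
    and balanced: "measure M {\<omega>\<in>space M. Y \<omega> = 1} = measure M {\<omega>\<in>space M. Y \<omega> = -1}"
    and hm[measurable]: "h \<in> MX \<rightarrow>\<^sub>M count_space UNIV"
    and hl: "\<forall>x\<in>space MX. h x \<in> labels"
    and fninf: "\<And>v. f v \<noteq> -\<infinity>"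
  defines "a \<equiv> measure M {\<omega>\<in>space M. (h \<circ> X) \<omega> = 1}"
    and "p \<equiv> measure M {\<omega>\<in>space M. (h \<circ> X) \<omega> = 1 \<and> Y \<omega> = 1}"
  shows "fdiv f (Pj M (h \<circ> X) Y) (Qj M (h \<circ> X) Y) = DD f a p"
    "fdiv f (Pj M (h \<circ> X) Yt) (Qj M (h \<circ> X) Yt) = DD f a ((1-2*e)*p + e*a)"
    "FIT M (h \<circ> X) Yt 1 1 = Fit1 a ((1-2*e)*p + e*a)"
    "FIT M (h \<circ> X) Yt (-1) (-1) = Fitm a ((1-2*e)*p + e*a)"
    "FIT M (h \<circ> X) Y 1 1 = Fit1 a p"
    "FIT M (h \<circ> X) Y (-1) (-1) = Fitm a p"
    "0 \<le> p" "p \<le> a" "p \<le> 1/2" "a - p \<le> 1/2"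
proof -
  interpret prob_space M by fact
  have Xs: "X \<omega> \<in> space MX" if "\<omega> \<in> space M" for \<omega> using Xm that by (rule measurable_space)
  have hXl: "\<forall>\<omega>\<in>space M. h (X \<omega>) \<in> labels" using hl Xs by blast
  have hXm[measurable]: "(\<lambda>\<omega>. h (X \<omega>)) \<in> M \<rightarrow>\<^sub>M count_space UNIV" by measurable
  define pr where "pr = (\<lambda>P. measure M {\<omega>\<in>space M. P \<omega>})"
  have sY: "pr (\<lambda>\<omega>. True) = pr (\<lambda>\<omega>. Y \<omega> = 1) + pr (\<lambda>\<omega>. Y \<omega> = -1)"
    unfolding pr_def using split_lab[OF PS _ Ym Yl, of "\<lambda>\<omega>. True"] by simp
  have one: "pr (\<lambda>\<omega>. True) = 1" unfolding pr_def using prob_space by simp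
  have PY1: "pr (\<lambda>\<omega>. Y \<omega> = 1) = 1/2" and PYm: "pr (\<lambda>\<omega>. Y \<omega> = -1) = 1/2"
    using sY one balanced unfolding pr_def by simp_all
  have sH: "pr (\<lambda>\<omega>. True) = pr (\<lambda>\<omega>. h (X \<omega>) = 1) + pr (\<lambda>\<omega>. h (X \<omega>) = -1)"
    unfolding pr_def using split_lab[OF PS _ hXm hXl, of "\<lambda>\<omega>. True"] by simp
  have sHY: "pr (\<lambda>\<omega>. h (X \<omega>) = y) = pr (\<lambda>\<omega>. h (X \<omega>) = y \<and> Y \<omega> = 1) + pr (\<lambda>\<omega>. h (X \<omega>) = y \<and> Y \<omega> = -1)" for y
    unfolding pr_def by (rule split_lab[OF PS _ Ym Yl]) measurable
  have sYH: "pr (\<lambda>\<omega>. Y \<omega> = y) = pr (\<lambda>\<omega>. Y \<omega> = y \<and> h (X \<omega>) = 1) + pr (\<lambda>\<omega>. Y \<omega> = y \<and> h (X \<omega>) = -1)" for y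
    unfolding pr_def by (rule split_lab[OF PS _ hXm hXl]) measurable
  have comm: "pr (\<lambda>\<omega>. Y \<omega> = y \<and> h (X \<omega>) = z) = pr (\<lambda>\<omega>. h (X \<omega>) = z \<and> Y \<omega> = y)" for y z
    unfolding pr_def by (simp add: conj_commute)
  have sHYt: "pr (\<lambda>\<omega>. h (X \<omega>) = y \<and> Yt \<omega> = z) = pr (\<lambda>\<omega>. h (X \<omega>) = y \<and> Yt \<omega> = z \<and> Y \<omega> = 1)
       + pr (\<lambda>\<omega>. h (X \<omega>) = y \<and> Yt \<omega> = z \<and> Y \<omega> = -1)" for y z
    unfolding pr_def using split_lab[OF PS _ Ym Yl, of "\<lambda>\<omega>. h (X \<omega>) = y \<and> Yt \<omega> = z"] by (simp add: conj_assoc)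
  have Aset: "{x\<in>space MX. h x = y} \<in> sets MX" for y by measurable
  have conv: "{\<omega>\<in>space M. X \<omega> \<in> {x\<in>space MX. h x = y} \<and> Q \<omega>} = {\<omega>\<in>space M. h (X \<omega>) = y \<and> Q \<omega>}" for y Q
    using Xs by auto
  have NP: "pr (\<lambda>\<omega>. h (X \<omega>) = y \<and> Yt \<omega> = -1 \<and> Y \<omega> = 1) = e * pr (\<lambda>\<omega>. h (X \<omega>) = y \<and> Y \<omega> = 1)"
     "pr (\<lambda>\<omega>. h (X \<omega>) = y \<and> Yt \<omega> = 1 \<and> Y \<omega> = 1) = (1-e) * pr (\<lambda>\<omega>. h (X \<omega>) = y \<and> Y \<omega> = 1)"
     "pr (\<lambda>\<omega>. h (X \<omega>) = y \<and> Yt \<omega> = 1 \<and> Y \<omega> = -1) = e * pr (\<lambda>\<omega>. h (X \<omega>) = y \<and> Y \<omega> = -1)"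
     "pr (\<lambda>\<omega>. h (X \<omega>) = y \<and> Yt \<omega> = -1 \<and> Y \<omega> = -1) = (1-e) * pr (\<lambda>\<omega>. h (X \<omega>) = y \<and> Y \<omega> = -1)" for y
    using noise_pos[rule_format, OF Aset[of y]] noise_neg[rule_format, OF Aset[of y]]
    unfolding pr_def conv by (simp_all add: conj_ac)
  have sYt: "pr (\<lambda>\<omega>. Yt \<omega> = z) = pr (\<lambda>\<omega>. Yt \<omega> = z \<and> h (X \<omega>) = 1) + pr (\<lambda>\<omega>. Yt \<omega> = z \<and> h (X \<omega>) = -1)" for z
    unfolding pr_def by (rule split_lab[OF PS _ hXm hXl]) measurable
  have comm2: "pr (\<lambda>\<omega>. Yt \<omega> = y \<and> h (X \<omega>) = z) = pr (\<lambda>\<omega>. h (X \<omega>) = z \<and> Yt \<omega> = y)" for y z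
    unfolding pr_def by (simp add: conj_commute)
  have a_def': "a = pr (\<lambda>\<omega>. h (X \<omega>) = 1)" and p_def': "p = pr (\<lambda>\<omega>. h (X \<omega>) = 1 \<and> Y \<omega> = 1)"
    unfolding a_def p_def pr_def by simp_all
  define p' where "p' = (1-2*e)*p + e*a"
  have v1: "pr (\<lambda>\<omega>. h (X \<omega>) = 1 \<and> Y \<omega> = -1) = a - p"
    "pr (\<lambda>\<omega>. h (X \<omega>) = -1) = 1 - a"
    "pr (\<lambda>\<omega>. h (X \<omega>) = -1 \<and> Y \<omega> = 1) = 1/2 - p"
    "pr (\<lambda>\<omega>. h (X \<omega>) = -1 \<and> Y \<omega> = -1) = 1/2 - a + p"
    using sHY[of 1] sHY[of "-1"] sH one sYH[of 1] sYH[of "-1"] PY1 PYm comm a_def' p_def' by simp_all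
  have v2: "pr (\<lambda>\<omega>. h (X \<omega>) = 1 \<and> Yt \<omega> = 1) = p'"
    "pr (\<lambda>\<omega>. h (X \<omega>) = 1 \<and> Yt \<omega> = -1) = a - p'"
    "pr (\<lambda>\<omega>. h (X \<omega>) = -1 \<and> Yt \<omega> = 1) = 1/2 - p'"
    "pr (\<lambda>\<omega>. h (X \<omega>) = -1 \<and> Yt \<omega> = -1) = 1/2 - a + p'"
    using sHYt[of 1 1] sHYt[of 1 "-1"] sHYt[of "-1" 1] sHYt[of "-1" "-1"] NP[of 1] NP[of "-1"] v1 p_def'
    by (simp_all add: p'_def algebra_simps) (simp_all add: field_simps)
  have v3: "pr (\<lambda>\<omega>. Yt \<omega> = 1) = 1/2" "pr (\<lambda>\<omega>. Yt \<omega> = -1) = 1/2"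
    using sYt[of 1] sYt[of "-1"] comm2 v2 by simp_all
  have nn: "pr P \<ge> 0" for P unfolding pr_def by simp
  show "0 \<le> p" "p \<le> a" "p \<le> 1/2" "a - p \<le> 1/2"
    using nn[of "\<lambda>\<omega>. h (X \<omega>) = 1 \<and> Y \<omega> = 1"] nn[of "\<lambda>\<omega>. h (X \<omega>) = 1 \<and> Y \<omega> = -1"]
      nn[of "\<lambda>\<omega>. h (X \<omega>) = -1 \<and> Y \<omega> = 1"] nn[of "\<lambda>\<omega>. h (X \<omega>) = -1 \<and> Y \<omega> = -1"] v1 p_def'
    by simp_all
  show "fdiv f (Pj M (h \<circ> X) Y) (Qj M (h \<circ> X) Y) = DD f a p"
    apply (rule fdiv_eq)
    using v1 PY1 PYm a_def' p_def' \<open>0 \<le> p\<close> \<open>p \<le> a\<close> \<open>p \<le> 1/2\<close> \<open>a - p \<le> 1/2\<close> fninf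
    by (simp_all add: Pj_def Qj_def pr_def)
  have F: "FIT M (h \<circ> X) R y y' = (pr (\<lambda>\<omega>. h (X \<omega>) = y \<and> R \<omega> = y') / pr (\<lambda>\<omega>. R \<omega> = y')) / pr (\<lambda>\<omega>. h (X \<omega>) = y)" for R y y'
    by (simp add: FIT_def pr_def)
  show "FIT M (h \<circ> X) Y 1 1 = Fit1 a p" "FIT M (h \<circ> X) Y (-1) (-1) = Fitm a p"
    unfolding F v1 PY1 PYm a_def'[symmetric] p_def'[symmetric] by (simp_all add: Fit1_def Fitm_def)
  show "FIT M (h \<circ> X) Yt 1 1 = Fit1 a ((1-2*e)*p + e*a)" "FIT M (h \<circ> X) Yt (-1) (-1) = Fitm a ((1-2*e)*p + e*a)"
    unfolding F v1 v2 v3 a_def'[symmetric] p'_def[symmetric] by (simp_all add: Fit1_def Fitm_def)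
  have r': "0 \<le> p'" "p' \<le> a" "p' \<le> 1/2" "a - p' \<le> 1/2"
    using nn[of "\<lambda>\<omega>. h (X \<omega>) = 1 \<and> Yt \<omega> = 1"] nn[of "\<lambda>\<omega>. h (X \<omega>) = 1 \<and> Yt \<omega> = -1"]
      nn[of "\<lambda>\<omega>. h (X \<omega>) = -1 \<and> Yt \<omega> = 1"] nn[of "\<lambda>\<omega>. h (X \<omega>) = -1 \<and> Yt \<omega> = -1"] v2
    by simp_all
  show "fdiv f (Pj M (h \<circ> X) Yt) (Qj M (h \<circ> X) Yt) = DD f a ((1-2*e)*p + e*a)"
    unfolding p'_def[symmetric]
    apply (rule fdiv_eq)
    using v1 v2 v3 a_def' r' fninf
    by (simp_all add: Pj_def Qj_def pr_def)
qed

theorem theorem8: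
  fixes M :: "'a measure" and MX :: "'x measure"
    and X :: "'a \<Rightarrow> 'x" and Y Yt :: "'a \<Rightarrow> int"
    and e_p e_m :: real
    and H :: "('x \<Rightarrow> int) set" and hs :: "'x \<Rightarrow> int"
    and f :: "real \<Rightarrow> ereal"
  assumes "prob_space M"
    and "X \<in> M \<rightarrow>\<^sub>M MX"
    and "Y \<in> M \<rightarrow>\<^sub>M count_space UNIV" and "Yt \<in> M \<rightarrow>\<^sub>M count_space UNIV"
    and "\<forall>\<omega>\<in>space M. Y \<omega> \<in> labels" and "\<forall>\<omega>\<in>space M. Yt \<omega> \<in> labels"
    and "0 \<le> e_p" and "0 \<le> e_m" and "e_p + e_m < 1"
    and noise_pos: "\<forall>A\<in>sets MX.
           measure M {\<omega>\<in>space M. X \<omega> \<in> A \<and> Y \<omega> = 1 \<and> Yt \<omega> = -1}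
             = e_p * measure M {\<omega>\<in>space M. X \<omega> \<in> A \<and> Y \<omega> = 1}
         \<and> measure M {\<omega>\<in>space M. X \<omega> \<in> A \<and> Y \<omega> = 1 \<and> Yt \<omega> = 1}
             = (1 - e_p) * measure M {\<omega>\<in>space M. X \<omega> \<in> A \<and> Y \<omega> = 1}"
    and noise_neg: "\<forall>A\<in>sets MX.
           measure M {\<omega>\<in>space M. X \<omega> \<in> A \<and> Y \<omega> = -1 \<and> Yt \<omega> = 1}
             = e_m * measure M {\<omega>\<in>space M. X \<omega> \<in> A \<and> Y \<omega> = -1}
         \<and> measure M {\<omega>\<in>space M. X \<omega> \<in> A \<and> Y \<omega> = -1 \<and> Yt \<omega> = -1}
             = (1 - e_m) * measure M {\<omega>\<in>space M. X \<omega> \<in> A \<and> Y \<omega> = -1}"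
    and balanced: "measure M {\<omega>\<in>space M. Y \<omega> = 1} = measure M {\<omega>\<in>space M. Y \<omega> = -1}"
    and sym: "e_p = e_m"
    and H_meas: "\<forall>h\<in>H. h \<in> MX \<rightarrow>\<^sub>M count_space UNIV"
    and H_vals: "\<forall>h\<in>H. \<forall>x\<in>space MX. h x \<in> labels"
    and f_cases: "f \<in> {f_TV, f_JS, f_SH, f_Pearson, f_Neyman, f_KL, f_RKL}"
    and hs_in: "hs \<in> H"
    and hs_max: "\<forall>h\<in>H. fdiv f (Pj M (h \<circ> X) Y) (Qj M (h \<circ> X) Y)
                        \<le> fdiv f (Pj M (hs \<circ> X) Y) (Qj M (hs \<circ> X) Y)"
  shows "hs \<in> Hstar M X Y Yt H hs \<and>
         (\<forall>h\<in>Hstar M X Y Yt H hs.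
            fdiv f (Pj M (h \<circ> X) Yt) (Qj M (h \<circ> X) Yt)
              \<le> fdiv f (Pj M (hs \<circ> X) Yt) (Qj M (hs \<circ> X) Yt))"
proof -
  have gf: "f 1 = 0" "\<And>v. f v \<noteq> -\<infinity>" "\<And>v. v > 0 \<Longrightarrow> f v \<noteq> \<infinity>"
    "\<And>x y. 0 \<le> x \<Longrightarrow> x < y \<Longrightarrow> y \<le> 1 \<Longrightarrow> Gf f x < Gf f y"
    using good_f[OF f_cases] by blast+
  have noise_neg': "\<forall>A\<in>sets MX.
           measure M {\<omega>\<in>space M. X \<omega> \<in> A \<and> Y \<omega> = -1 \<and> Yt \<omega> = 1}
             = e_p * measure M {\<omega>\<in>space M. X \<omega> \<in> A \<and> Y \<omega> = -1}
         \<and> measure M {\<omega>\<in>space M. X \<omega> \<in> A \<and> Y \<omega> = -1 \<and> Yt \<omega> = -1}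
             = (1 - e_p) * measure M {\<omega>\<in>space M. X \<omega> \<in> A \<and> Y \<omega> = -1}"
    using noise_neg sym by simp
  have e: "0 \<le> e_p" "e_p < 1/2" using assms(7,9) sym by auto
  show ?thesis
  proof (intro conjI ballI)
    show "hs \<in> Hstar M X Y Yt H hs" by (simp add: Hstar_def)
  next
    fix h assume hH: "h \<in> Hstar M X Y Yt H hs"
    show "fdiv f (Pj M (h \<circ> X) Yt) (Qj M (h \<circ> X) Yt) \<le> fdiv f (Pj M (hs \<circ> X) Yt) (Qj M (hs \<circ> X) Yt)"
    proof (cases "h = hs")
      case True then show ?thesis by simp
    next
      case False
      then have hin: "h \<in> H"
        and c1: "min (FIT M (h \<circ> X) Yt 1 1) (FIT M (h \<circ> X) Yt (-1) (-1))
               \<ge> max (FIT M (hs \<circ> X) Y 1 1) (FIT M (hs \<circ> X) Y (-1) (-1))"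
        and c2: "max (FIT M (hs \<circ> X) Y 1 1) (FIT M (hs \<circ> X) Y (-1) (-1)) \<ge> 1"
        using hH by (auto simp: Hstar_def)
      note Rh = reduce[OF assms(1-6) noise_pos noise_neg' balanced bspec[OF H_meas hin]
          bspec[OF H_vals hin] gf(2)]
      note Rs = reduce[OF assms(1-6) noise_pos noise_neg' balanced bspec[OF H_meas hs_in]
          bspec[OF H_vals hs_in] gf(2)]
      have hm: "fdiv f (Pj M (h \<circ> X) Y) (Qj M (h \<circ> X) Y) \<le> fdiv f (Pj M (hs \<circ> X) Y) (Qj M (hs \<circ> X) Y)"
        using hs_max hin by blast
      have A: "DD f (measure M {\<omega>\<in>space M. (h \<circ> X) \<omega> = 1}) (measure M {\<omega>\<in>space M. (h \<circ> X) \<omega> = 1 \<and> Y \<omega> = 1})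
          \<le> DD f (measure M {\<omega>\<in>space M. (hs \<circ> X) \<omega> = 1}) (measure M {\<omega>\<in>space M. (hs \<circ> X) \<omega> = 1 \<and> Y \<omega> = 1})"
        using hm unfolding Rh(1) Rs(1) .
      note B = c1[unfolded Rh(3) Rh(4) Rs(5) Rs(6)]
      note C = c2[unfolded Rs(5) Rs(6)]
      show ?thesis
        unfolding Rh(2) Rs(2)
        by (rule core[OF gf(1) gf(2) gf(3) gf(4) Rh(7-10) Rs(7-10) e A B C])
    qed
  qed
qed

end
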